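(* Let $1\le k\le d$ and let $\alpha^1,\dots,\alpha^k\in\mathbb{R}^d$ be such that $\alpha^1,\dots,\alpha^k,e_{k+1},\dots,e_d$ are linearly independent. Let $\alpha^{k+1}\in\mathbb{R}^d$ be such that $\sum_{i=1}^{k+1}\theta_i\alpha^i=0$ for some $\theta_i>0$ with $\sum_{i=1}^{k+1}\theta_i=1$. Let $M_1,\dots,M_{k+1}>0$ and let $a_i<b_i$ be integers for $k+1\le i\le d$. Then $$\sum_{j_1\in\mathbb{Z}}\cdots\sum_{j_k\in\mathbb{Z}}\sum_{j_{k+1}=a_{k+1}}^{b_{k+1}}\cdots\sum_{j_d=a_d}^{b_d}\min_{1\le n\le k+1}\{M_n2^{\alpha^n\cdot\vec j}\}\le C\prod_{i=k+1}^d(b_i-a_i)\prod_{i=1}^{k+1}M_i^{\theta_i},$$ where $\vec j=(j_1,\dots,j_d)$ and $C$ is independent of all $a_n$, $b_n$, $M_n$.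
   Context: $e_1,\dots,e_d$ is the standard basis of $\mathbb{R}^d$ and $\cdot$ the standard inner product. *)

theory Defs
  imports "HOL-Analysis.Analysis"
begin

text \<open>Vectors of R^d are represented as functions nat => real, only the
coordinates 1..d being relevant. Families of vectors are indexed by nat.\<close>

definition std_basis :: "nat \<Rightarrow> nat \<Rightarrow> real" where
  "std_basis n i = (if i = n then 1 else 0)"

definition lin_indep_family :: "nat \<Rightarrow> (nat \<Rightarrow> nat \<Rightarrow> real) \<Rightarrow> nat set \<Rightarrow> bool" where
  "lin_indep_family d v I \<longleftrightarrow>
     (\<forall>c :: nat \<Rightarrow> real. (\<forall>i\<in>{1..d}. (\<Sum>n\<in>I. c n * v n i) = 0) \<longrightarrow> (\<forall>n\<in>I. c n = 0))"

definition dotZ :: "nat \<Rightarrow> (nat \<Rightarrow> real) \<Rightarrow> (nat \<Rightarrow> int) \<Rightarrow> real" where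
  "dotZ d x j = (\<Sum>i=1..d. x i * of_int (j i))"

definition lattice_box :: "nat \<Rightarrow> nat \<Rightarrow> (nat \<Rightarrow> int) \<Rightarrow> (nat \<Rightarrow> int) \<Rightarrow> (nat \<Rightarrow> int) set" where
  "lattice_box d k a b = {j. (\<forall>i. i \<notin> {1..d} \<longrightarrow> j i = 0) \<and> (\<forall>i\<in>{k+1..d}. a i \<le> j i \<and> j i \<le> b i)}"

end

theory Submission
  imports Defs "Jordan_Normal_Form.Determinant"
begin


lemma sum_shift1: "(\<Sum>n=1..k. f n) = (\<Sum>n<k. f (Suc n))"
  by (induction k) auto

lemma left_inverse_exists:
  fixes \<alpha> :: "nat \<Rightarrow> nat \<Rightarrow> real" and k :: nat
  assumes indep: "\<forall>c. (\<forall>i\<in>{1..k}. (\<Sum>n=1..k. c n * \<alpha> n i) = 0) \<longrightarrow> (\<forall>n\<in>{1..k}. c n = 0)"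
  shows "\<exists>\<beta>. \<forall>i\<in>{1..k}. \<forall>l\<in>{1..k}. (\<Sum>n=1..k. \<beta> i n * \<alpha> n l) = (if i = l then 1 else 0)"
proof -
  define Bt :: "real mat" where "Bt = mat k k (\<lambda>(l,n). \<alpha> (Suc n) (Suc l))"
  have Bc: "Bt \<in> carrier_mat k k" unfolding Bt_def by simp
  have "det Bt \<noteq> 0"
  proof
    assume "det Bt = 0"
    then obtain v where v: "v \<in> carrier_vec k" "v \<noteq> 0\<^sub>v k" "Bt *\<^sub>v v = 0\<^sub>v k"
      using det_0_iff_vec_prod_zero_field[OF Bc] by blast
    define c where "c n = v $ (n - 1)" for n
    have "\<forall>i\<in>{1..k}. (\<Sum>n=1..k. c n * \<alpha> n i) = 0"
    proof
      fix i assume i: "i \<in> {1..k}"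
      have "(Bt *\<^sub>v v) $ (i - 1) = 0" using v(3) i by auto
      hence "(\<Sum>n<k. \<alpha> (Suc n) i * v $ n) = 0"
        using i v(1) unfolding Bt_def
        by (auto simp: mult_mat_vec_def scalar_prod_def atLeast0LessThan ac_simps)
      thus "(\<Sum>n=1..k. c n * \<alpha> n i) = 0"
        unfolding sum_shift1 c_def by (simp add: ac_simps)
    qed
    with indep have "\<forall>n\<in>{1..k}. c n = 0" by blast
    hence "v = 0\<^sub>v k" using v(1) unfolding c_def
    proof (intro eq_vecI)
      fix i assume "\<forall>n\<in>{1..k}. v $ (n - 1) = 0" "i < dim_vec (0\<^sub>v k)"
      moreover have "Suc i \<in> {1..k}" using \<open>i < dim_vec (0\<^sub>v k)\<close> by simp
      ultimately have "v $ (Suc i - 1) = 0" by blast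
      thus "v $ i = 0\<^sub>v k $ i" using \<open>i < dim_vec (0\<^sub>v k)\<close> by simp
    qed auto
    with v(2) show False by simp
  qed
  from det_non_zero_imp_unit[OF Bc this, of undefined]
  obtain Y where Y: "Y \<in> carrier_mat k k" "Bt * Y = 1\<^sub>m k"
    unfolding Units_def ring_mat_def by auto
  define \<beta> where "\<beta> i n = Y $$ (n - 1, i - 1)" for i n
  show ?thesis
  proof (intro exI[of _ \<beta>] ballI)
    fix i l assume i: "i \<in> {1..k}" and l: "l \<in> {1..k}"
    have "(Bt * Y) $$ (l - 1, i - 1) = (if i = l then 1 else 0)"
      using Y(2) i l by auto
    moreover have "(Bt * Y) $$ (l - 1, i - 1) = (\<Sum>n<k. \<alpha> (Suc n) l * Y $$ (n, i - 1))"
      using i l Y(1) unfolding Bt_def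
      by (auto simp: times_mat_def scalar_prod_def atLeast0LessThan row_def col_def)
    ultimately show "(\<Sum>n=1..k. \<beta> i n * \<alpha> n l) = (if i = l then 1 else 0)"
      unfolding sum_shift1 \<beta>_def by (simp add: ac_simps)
  qed
qed


lemma min_bound:
  fixes I :: "nat set" and \<theta> z :: "nat \<Rightarrow> real"
  assumes fin: "finite I" and ne: "I \<noteq> {}" and pos: "\<forall>n\<in>I. \<theta> n > 0"
    and s1: "sum \<theta> I = 1" and s0: "(\<Sum>n\<in>I. \<theta> n * z n) = 0"
  shows "\<exists>n\<in>I. z n \<le> - (\<Sum>l\<in>I. \<bar>z l\<bar>) / (1 / Min (\<theta>`I) + card I)"
proof -
  define m where "m = Min (z`I)"
  have "m \<in> z`I" unfolding m_def using fin ne by (intro Min_in) auto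
  then obtain n where n: "n \<in> I" "z n = m" by auto
  have zm: "\<And>l. l \<in> I \<Longrightarrow> m \<le> z l" unfolding m_def using fin by simp
  define \<mu> where "\<mu> = Min (\<theta>`I)"
  have "\<mu> \<in> \<theta>`I" unfolding \<mu>_def using fin ne by (intro Min_in) auto
  hence \<mu>pos: "\<mu> > 0" using pos by auto
  have \<mu>le: "\<And>l. l \<in> I \<Longrightarrow> \<mu> \<le> \<theta> l" unfolding \<mu>_def using fin by simp
  have "(\<Sum>l\<in>I. \<theta> l * (z l - m)) = (\<Sum>l\<in>I. \<theta> l * z l) - (\<Sum>l\<in>I. \<theta> l) * m"
    by (simp add: right_diff_distrib sum_subtractf sum_distrib_right)
  hence eq: "(\<Sum>l\<in>I. \<theta> l * (z l - m)) = - m" using s0 s1 by simp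
  have "0 \<le> (\<Sum>l\<in>I. \<theta> l * (z l - m))"
  proof (rule sum_nonneg)
    fix l assume l: "l \<in> I"
    have "\<theta> l > 0" "m \<le> z l" using zm[OF l] pos l by auto
    thus "0 \<le> \<theta> l * (z l - m)" by simp
  qed
  hence mle: "m \<le> 0" using eq by simp
  have "(\<Sum>l\<in>I. \<mu> * (z l - m)) \<le> (\<Sum>l\<in>I. \<theta> l * (z l - m))"
  proof (rule sum_mono)
    fix l assume l: "l \<in> I"
    have "\<mu> \<le> \<theta> l" "m \<le> z l" using zm[OF l] \<mu>le[OF l] by auto
    thus "\<mu> * (z l - m) \<le> \<theta> l * (z l - m)" by (simp add: mult_right_mono)
  qed
  hence "\<mu> * (\<Sum>l\<in>I. (z l - m)) \<le> - m" using eq by (simp add: sum_distrib_left)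
  hence S: "(\<Sum>l\<in>I. (z l - m)) \<le> (- m) / \<mu>" by (subst pos_le_divide_eq[OF \<mu>pos]) (simp add: mult.commute)
  have "(\<Sum>l\<in>I. \<bar>z l\<bar>) \<le> (\<Sum>l\<in>I. (z l - m) + (- m))"
  proof (rule sum_mono)
    fix l assume "l \<in> I" thus "\<bar>z l\<bar> \<le> (z l - m) + (- m)" using zm[of l] mle by linarith
  qed
  also have "\<dots> = (\<Sum>l\<in>I. (z l - m)) + card I * (- m)" by (subst sum.distrib) simp
  also have "\<dots> \<le> (- m) / \<mu> + card I * (- m)" using S by simp
  also have "\<dots> = (- m) * (1 / \<mu> + card I)" by (simp add: algebra_simps)
  finally have A: "(\<Sum>l\<in>I. \<bar>z l\<bar>) \<le> (- m) * (1 / \<mu> + card I)" .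
  have pos2: "1 / \<mu> + card I > 0" using \<mu>pos by (simp add: add_pos_nonneg)
  from A pos2 have "(\<Sum>l\<in>I. \<bar>z l\<bar>) / (1 / \<mu> + card I) \<le> - m"
    by (simp add: divide_le_eq)
  hence "m \<le> - (\<Sum>l\<in>I. \<bar>z l\<bar>) / (1 / \<mu> + card I)" by simp
  thus ?thesis using n unfolding \<mu>_def by auto
qed

lemma geo_nat_le:
  fixes x :: real
  assumes "finite A" "0 \<le> x" "x < 1"
  shows "(\<Sum>n\<in>A. x ^ n) \<le> 1 / (1 - x)"
proof -
  have sm: "summable (\<lambda>n. x ^ n)" using assms by (intro summable_geometric) simp
  have "(\<Sum>n\<in>A. x ^ n) \<le> (\<Sum>n. x ^ n)"
    using assms sm by (intro sum_le_suminf) auto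
  also have "\<dots> = 1 / (1 - x)" using suminf_geometric[of x] assms by simp
  finally show ?thesis .
qed

lemma geo_int_le:
  fixes x :: real
  assumes "finite Q" "0 \<le> x" "x < 1"
  shows "(\<Sum>q\<in>Q. x ^ nat \<bar>q\<bar>) \<le> 2 / (1 - x)"
proof -
  have Q: "Q = {q\<in>Q. q \<ge> 0} \<union> {q\<in>Q. q < 0}" by auto
  have "(\<Sum>q\<in>Q. x ^ nat \<bar>q\<bar>) = (\<Sum>q\<in>{q\<in>Q. q \<ge> 0}. x ^ nat \<bar>q\<bar>) + (\<Sum>q\<in>{q\<in>Q. q < 0}. x ^ nat \<bar>q\<bar>)"
    using assms(1) by (subst Q, subst sum.union_disjoint) auto
  also have "(\<Sum>q\<in>{q\<in>Q. q \<ge> 0}. x ^ nat \<bar>q\<bar>) = (\<Sum>n\<in>(\<lambda>q. nat \<bar>q\<bar>) ` {q\<in>Q. q \<ge> 0}. x ^ n)"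
    by (subst sum.reindex) (auto simp: inj_on_def)
  also have "\<dots> \<le> 1 / (1 - x)" using assms by (intro geo_nat_le) auto
  also have "(\<Sum>q\<in>{q\<in>Q. q < 0}. x ^ nat \<bar>q\<bar>) = (\<Sum>n\<in>(\<lambda>q. nat \<bar>q\<bar>) ` {q\<in>Q. q < 0}. x ^ n)"
    by (subst sum.reindex) (auto simp: inj_on_def)
  also have "\<dots> \<le> 1 / (1 - x)" using assms by (intro geo_nat_le) auto
  finally show ?thesis by simp
qed

definition K1 :: "real \<Rightarrow> real" where "K1 \<rho> = 2 * exp \<rho> / (1 - exp (- \<rho>))"

lemma K1_pos: "\<rho> > 0 \<Longrightarrow> K1 \<rho> > 0"
  unfolding K1_def by (simp add: divide_pos_pos)

lemma exp_sum_le: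
  fixes \<rho> t :: real
  assumes "finite S" "\<rho> > 0"
  shows "(\<Sum>m\<in>S. exp (- \<rho> * \<bar>real_of_int m - t\<bar>)) \<le> K1 \<rho>"
proof -
  define c where "c = \<lceil>t\<rceil>"
  define x where "x = exp (- \<rho>)"
  have x: "0 \<le> x" "x < 1" unfolding x_def using assms by auto
  have "(\<Sum>m\<in>S. exp (- \<rho> * \<bar>real_of_int m - t\<bar>)) \<le> (\<Sum>m\<in>S. exp \<rho> * x ^ nat \<bar>m - c\<bar>)"
  proof (rule sum_mono)
    fix m assume "m \<in> S"
    have ct: "\<bar>real_of_int c - t\<bar> \<le> 1" unfolding c_def
      by (smt (verit) ceiling_correct)
    have "x ^ nat \<bar>m - c\<bar> = exp (real (nat \<bar>m - c\<bar>) * (- \<rho>))"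
      unfolding x_def exp_of_nat_mult[symmetric] by simp
    also have "real (nat \<bar>m - c\<bar>) = \<bar>real_of_int m - real_of_int c\<bar>" by simp
    finally have xe: "exp \<rho> * x ^ nat \<bar>m - c\<bar> = exp (\<rho> - \<rho> * \<bar>real_of_int m - real_of_int c\<bar>)"
      by (simp add: exp_diff exp_minus field_simps)
    have "\<bar>real_of_int m - real_of_int c\<bar> \<le> \<bar>real_of_int m - t\<bar> + 1" using ct by linarith
    hence "\<rho> * \<bar>real_of_int m - real_of_int c\<bar> \<le> \<rho> * (\<bar>real_of_int m - t\<bar> + 1)"
      using assms(2) by (intro mult_left_mono) auto
    hence "- \<rho> * \<bar>real_of_int m - t\<bar> \<le> \<rho> - \<rho> * \<bar>real_of_int m - real_of_int c\<bar>"
      by (simp add: algebra_simps)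
    thus "exp (- \<rho> * \<bar>real_of_int m - t\<bar>) \<le> exp \<rho> * x ^ nat \<bar>m - c\<bar>" unfolding xe by simp
  qed
  also have "\<dots> = exp \<rho> * (\<Sum>m\<in>S. x ^ nat \<bar>m - c\<bar>)" by (simp add: sum_distrib_left)
  also have "(\<Sum>m\<in>S. x ^ nat \<bar>m - c\<bar>) = (\<Sum>q\<in>(\<lambda>m. m - c) ` S. x ^ nat \<bar>q\<bar>)"
    by (subst sum.reindex) (auto simp: inj_on_def)
  also have "\<dots> \<le> 2 / (1 - x)" using assms x by (intro geo_int_le) auto
  finally show ?thesis unfolding K1_def x_def by (simp add: field_simps)
qed

definition Zbox :: "nat set \<Rightarrow> (nat \<Rightarrow> int set) \<Rightarrow> (nat \<Rightarrow> int) set" where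
  "Zbox I S = {v. (\<forall>i\<in>I. v i \<in> S i) \<and> (\<forall>i. i \<notin> I \<longrightarrow> v i = 0)}"

lemma Zbox_bij: "bij_betw (\<lambda>v. restrict v I) (Zbox I S) (PiE I S)"
proof (rule bij_betw_byWitness[where f' = "\<lambda>g i. if i \<in> I then g i else 0"])
  show "\<forall>a\<in>Zbox I S. (\<lambda>i. if i \<in> I then restrict a I i else 0) = a"
  proof
    fix a assume a: "a \<in> Zbox I S"
    show "(\<lambda>i. if i \<in> I then restrict a I i else 0) = a"
    proof
      fix i show "(if i \<in> I then restrict a I i else 0) = a i"
        using a unfolding Zbox_def by (cases "i \<in> I") simp_all
    qed
  qed
  show "\<forall>a'\<in>PiE I S. restrict (\<lambda>i. if i \<in> I then a' i else 0) I = a'"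
  proof
    fix g assume g: "g \<in> PiE I S"
    show "restrict (\<lambda>i. if i \<in> I then g i else 0) I = g"
    proof
      fix i show "restrict (\<lambda>i. if i \<in> I then g i else 0) I i = g i"
        using PiE_arb[OF g, of i] by (cases "i \<in> I") simp_all
    qed
  qed
  show "(\<lambda>v. restrict v I) ` Zbox I S \<subseteq> PiE I S" unfolding Zbox_def by auto
  show "(\<lambda>g i. if i \<in> I then g i else 0) ` PiE I S \<subseteq> Zbox I S"
    unfolding Zbox_def by (auto simp: PiE_iff)
qed

lemma Zbox_finite: "finite I \<Longrightarrow> (\<And>i. i \<in> I \<Longrightarrow> finite (S i)) \<Longrightarrow> finite (Zbox I S)"
  using bij_betw_finite[OF Zbox_bij[of I S]] finite_PiE[of I S] by blast

lemma Zbox_card: "finite I \<Longrightarrow> card (Zbox I S) = (\<Prod>i\<in>I. card (S i))"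
  using bij_betw_same_card[OF Zbox_bij[of I S]] card_PiE[of I S] by simp

lemma Zbox_prod_sum:
  fixes f :: "nat \<Rightarrow> int \<Rightarrow> real"
  assumes "finite I" "\<And>i. i \<in> I \<Longrightarrow> finite (S i)"
  shows "(\<Sum>v\<in>Zbox I S. \<Prod>i\<in>I. f i (v i)) = (\<Prod>i\<in>I. \<Sum>y\<in>S i. f i y)"
proof -
  have "(\<Sum>g\<in>PiE I S. \<Prod>i\<in>I. f i (g i)) = (\<Sum>v\<in>Zbox I S. \<Prod>i\<in>I. f i (restrict v I i))"
    by (rule sum.reindex_bij_betw[OF Zbox_bij, symmetric])
  also have "\<dots> = (\<Sum>v\<in>Zbox I S. \<Prod>i\<in>I. f i (v i))"
    by (intro sum.cong refl prod.cong) simp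
  finally have "(\<Sum>v\<in>Zbox I S. \<Prod>i\<in>I. f i (v i)) = (\<Sum>g\<in>PiE I S. \<Prod>i\<in>I. f i (g i))" by simp
  also have "\<dots> = (\<Prod>i\<in>I. \<Sum>y\<in>S i. f i y)" using assms by (simp add: prod_sum_PiE)
  finally show ?thesis .
qed

lemma eqP_test:
  fixes M lP x zz :: real
  assumes "M > 0" "zz = ln M + ln 2 * x - lP"
  shows "M * 2 powr x = exp lP * exp zz"
proof -
  have "M * 2 powr x = exp (ln M + ln 2 * x)" using assms by (simp add: powr_def exp_add mult.commute)
  also have "\<dots> = exp lP * exp zz" using assms(2) by (simp add: exp_add[symmetric])
  finally show ?thesis .
qed

lemma D_test:
  fixes S D c :: real
  assumes "c = 1 / D"
  shows "- S / D = - c * S"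
  using assms by simp

theorem lemma5p3:
  fixes d k :: nat and \<alpha> :: "nat \<Rightarrow> nat \<Rightarrow> real" and \<theta> :: "nat \<Rightarrow> real"
  assumes "1 \<le> k" and "k \<le> d"
    and "lin_indep_family d (\<lambda>n. if n \<le> k then \<alpha> n else std_basis n) {1..d}"
    and "\<forall>n\<in>{1..k+1}. \<theta> n > 0"
    and "(\<Sum>n=1..k+1. \<theta> n) = 1"
    and "\<forall>i\<in>{1..d}. (\<Sum>n=1..k+1. \<theta> n * \<alpha> n i) = 0"
  shows "\<exists>C :: real. \<forall>(M :: nat \<Rightarrow> real) (a :: nat \<Rightarrow> int) (b :: nat \<Rightarrow> int).
            (\<forall>n\<in>{1..k+1}. M n > 0) \<longrightarrow> (\<forall>i\<in>{k+1..d}. a i < b i) \<longrightarrow>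
            (\<Sum>\<^sub>\<infinity>j\<in>lattice_box d k a b.
                ennreal (Min ((\<lambda>n. M n * 2 powr dotZ d (\<alpha> n) j) ` {1..k+1})))
            \<le> ennreal (C * (\<Prod>i=k+1..d. real_of_int (b i - a i)) * (\<Prod>n=1..k+1. M n powr \<theta> n))"
proof -
  have split: "{1..d} = {1..k} \<union> {k+1..d}" using assms(2) by auto
  have sumsplit: "(\<Sum>i\<in>{1..d}. g i) = (\<Sum>i=1..k. g i) + (\<Sum>i=k+1..d. g i)" for g :: "nat \<Rightarrow> real"
    by (subst split, subst sum.union_disjoint) auto
  have indep: "\<forall>c. (\<forall>i\<in>{1..k}. (\<Sum>n=1..k. c n * \<alpha> n i) = 0) \<longrightarrow> (\<forall>n\<in>{1..k}. c n = 0)"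
  proof (intro allI impI)
    fix c assume hc: "\<forall>i\<in>{1..k}. (\<Sum>n=1..k. c n * \<alpha> n i) = 0"
    define c' where "c' n = (if n \<le> k then c n else - (\<Sum>m=1..k. c m * \<alpha> m n))" for n
    have "\<forall>i\<in>{1..d}. (\<Sum>n\<in>{1..d}. c' n * (if n \<le> k then \<alpha> n else std_basis n) i) = 0"
    proof
      fix i assume i: "i \<in> {1..d}"
      have "(\<Sum>n\<in>{1..d}. c' n * (if n \<le> k then \<alpha> n else std_basis n) i)
          = (\<Sum>n=1..k. c n * \<alpha> n i) + (\<Sum>n=k+1..d. c' n * (if i = n then 1 else 0))"
        unfolding sumsplit by (auto simp: c'_def std_basis_def intro!: sum.cong)
      also have "(\<Sum>n=k+1..d. c' n * (if i = n then 1 else 0)) = (if i \<in> {k+1..d} then c' i else 0)"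
        by (simp add: if_distrib[of "\<lambda>x. _ * x"] sum.delta cong: if_cong)
      finally show "(\<Sum>n\<in>{1..d}. c' n * (if n \<le> k then \<alpha> n else std_basis n) i) = 0"
        using hc i by (auto simp: c'_def)
    qed
    hence "\<forall>n\<in>{1..d}. c' n = 0" using assms(3) unfolding lin_indep_family_def by blast
    show "\<forall>n\<in>{1..k}. c n = 0"
    proof
      fix n assume n: "n \<in> {1..k}"
      hence "n \<in> {1..d}" using assms(2) by auto
      with \<open>\<forall>n\<in>{1..d}. c' n = 0\<close> have "c' n = 0" by blast
      thus "c n = 0" using n by (simp add: c'_def)
    qed
  qed
from left_inverse_exists[OF indep] obtain \<beta> where \<beta>: "\<forall>i\<in>{1..k}. \<forall>l\<in>{1..k}. (\<Sum>n=1..k. \<beta> i n * \<alpha> n l) = (if i = l then 1 else 0)" ..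
  define R where "R = 1 + (\<Sum>i=1..k. \<Sum>n=1..k. \<bar>\<beta> i n\<bar>)"
  define \<mu> where "\<mu> = Min (\<theta> ` {1..k+1})"
  define c where "c = 1 / (1 / \<mu> + real (card {1..k+1}))"
  define \<rho> where "\<rho> = c * ln 2 / (real k * R)"
  define C where "C = K1 \<rho> ^ k * 2 ^ (d - k)"
  have R1: "R \<ge> 1" unfolding R_def by (simp add: sum_nonneg)
  have \<mu>pos: "\<mu> > 0" unfolding \<mu>_def using assms(4) by auto
  have cpos: "c > 0" unfolding c_def using \<mu>pos by (simp add: add_pos_nonneg)
  have \<rho>pos: "\<rho> > 0" unfolding \<rho>_def using cpos R1 assms(1) by simp
  have \<beta>R: "\<bar>\<beta> i n\<bar> \<le> R" if "i \<in> {1..k}" "n \<in> {1..k}" for i n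
  proof -
    have "\<bar>\<beta> i n\<bar> \<le> (\<Sum>n=1..k. \<bar>\<beta> i n\<bar>)"
      using that by (intro member_le_sum) auto
    also have "\<dots> \<le> (\<Sum>i=1..k. \<Sum>n=1..k. \<bar>\<beta> i n\<bar>)"
      using that by (intro member_le_sum[of _ _ "\<lambda>i. \<Sum>n=1..k. \<bar>\<beta> i n\<bar>"]) (auto intro: sum_nonneg)
    finally show ?thesis unfolding R_def by simp
  qed
  show ?thesis
  proof (intro exI[of _ C] allI impI)
    fix M :: "nat \<Rightarrow> real" and a b :: "nat \<Rightarrow> int"
    assume Mpos: "\<forall>n\<in>{1..k+1}. M n > 0" and ab: "\<forall>i\<in>{k+1..d}. a i < b i"
    define lP where "lP = (\<Sum>n=1..k+1. \<theta> n * ln (M n))"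
    define P where "P = (\<Prod>n=1..k+1. M n powr \<theta> n)"
    have P: "P = exp lP"
    proof -
      have "P = (\<Prod>n=1..k+1. exp (\<theta> n * ln (M n)))"
        unfolding P_def
      proof (rule prod.cong)
        fix n assume "n \<in> {1..k+1}"
        hence "M n > 0" using Mpos by blast
        thus "M n powr \<theta> n = exp (\<theta> n * ln (M n))" by (simp add: powr_def mult.commute)
      qed simp
      thus ?thesis unfolding lP_def exp_sum[OF finite_atLeastAtMost] .
    qed
    have Ppos: "P > 0" using P by simp
    define x where "x n j = dotZ d (\<alpha> n) j" for n j
    define z where "z n j = ln (M n) + ln 2 * x n j - lP" for n j
    define s where "s n j = ln (M n) + ln 2 * (\<Sum>i=k+1..d. \<alpha> n i * of_int (j i)) - lP" for n j
    define t where "t i j = - (\<Sum>n=1..k. \<beta> i n * s n j) / ln 2" for i j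
    define G where "G j = P * (\<Prod>i=1..k. exp (- \<rho> * \<bar>real_of_int (j i) - t i j\<bar>))" for j
    define f where "f j = Min ((\<lambda>n. M n * 2 powr dotZ d (\<alpha> n) j) ` {1..k+1})" for j
    have fpos: "f j > 0" for j
    proof -
      have "f j \<in> (\<lambda>n. M n * 2 powr dotZ d (\<alpha> n) j) ` {1..k+1}"
        unfolding f_def by (intro Min_in) auto
      thus ?thesis using Mpos by auto
    qed
    have key: "f j \<le> G j" for j
    proof -
      have xs: "(\<Sum>n=1..k+1. \<theta> n * x n j) = 0"
      proof -
        have "(\<Sum>n=1..k+1. \<theta> n * x n j) = (\<Sum>n=1..k+1. \<Sum>i=1..d. \<theta> n * \<alpha> n i * of_int (j i))"
          unfolding x_def dotZ_def by (simp only: sum_distrib_left mult.assoc)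
        also have "\<dots> = (\<Sum>i=1..d. \<Sum>n=1..k+1. \<theta> n * \<alpha> n i * of_int (j i))"
          by (rule sum.swap)
        also have "\<dots> = (\<Sum>i=1..d. (\<Sum>n=1..k+1. \<theta> n * \<alpha> n i) * of_int (j i))"
          by (simp only: sum_distrib_right)
        also have "\<dots> = 0" using assms(6) by simp
        finally show ?thesis .
      qed
      have zs: "(\<Sum>n=1..k+1. \<theta> n * z n j) = 0"
      proof -
        have "(\<Sum>n=1..k+1. \<theta> n * z n j) = (\<Sum>n=1..k+1. \<theta> n * ln (M n) + ln 2 * (\<theta> n * x n j) - lP * \<theta> n)"
          by (rule sum.cong) (simp_all add: z_def algebra_simps)
        also have "\<dots> = lP + ln 2 * (\<Sum>n=1..k+1. \<theta> n * x n j) - lP * (\<Sum>n=1..k+1. \<theta> n)"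
          unfolding lP_def sum_subtractf sum.distrib sum_distrib_left ..
        finally have "(\<Sum>n=1..k+1. \<theta> n * z n j) = lP + ln 2 * (\<Sum>n=1..k+1. \<theta> n * x n j) - lP * (\<Sum>n=1..k+1. \<theta> n)" .
        thus ?thesis using xs assms(5) by simp
      qed
      obtain n where n: "n \<in> {1..k+1}"
        and zn: "z n j \<le> - (\<Sum>l\<in>{1..k+1}. \<bar>z l j\<bar>) / (1 / \<mu> + card {1..k+1})"
        using min_bound[of "{1..k+1}" \<theta> "\<lambda>n. z n j"] assms(4,5) zs unfolding \<mu>_def by auto
      have "f j \<le> M n * 2 powr dotZ d (\<alpha> n) j" unfolding f_def using n by (intro Min_le) auto
      also have "\<dots> = P * exp (z n j)"
        using Mpos n unfolding P x_def by (intro eqP_test) (auto simp: z_def x_def)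
      also have "\<dots> \<le> P * exp (- c * (\<Sum>l=1..k. \<bar>z l j\<bar>))"
      proof -
        have "(\<Sum>l=1..k. \<bar>z l j\<bar>) \<le> (\<Sum>l=1..k+1. \<bar>z l j\<bar>)" by (intro sum_mono2) auto
        have "z n j \<le> - c * (\<Sum>l=1..k. \<bar>z l j\<bar>)"
        proof -
          have D: "- (\<Sum>l\<in>{1..k+1}. \<bar>z l j\<bar>) / (1 / \<mu> + card {1..k+1}) = - c * (\<Sum>l\<in>{1..k+1}. \<bar>z l j\<bar>)"
            by (rule D_test) (simp add: c_def)
          have "c * (\<Sum>l=1..k. \<bar>z l j\<bar>) \<le> c * (\<Sum>l=1..k+1. \<bar>z l j\<bar>)"
            using \<open>(\<Sum>l=1..k. \<bar>z l j\<bar>) \<le> (\<Sum>l=1..k+1. \<bar>z l j\<bar>)\<close> cpos by (intro mult_left_mono) auto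
          thus ?thesis using zn D by linarith
        qed
        thus ?thesis using Ppos by simp
      qed
      also have "\<dots> \<le> P * exp (- \<rho> * (\<Sum>i=1..k. \<bar>real_of_int (j i) - t i j\<bar>))"
      proof -
        have zsplit: "z n j = ln 2 * (\<Sum>l=1..k. \<alpha> n l * of_int (j l)) + s n j" for n
          unfolding z_def s_def x_def dotZ_def sumsplit by (simp add: algebra_simps)
        have ti: "ln 2 * (real_of_int (j i) - t i j) = (\<Sum>n=1..k. \<beta> i n * z n j)" if i: "i \<in> {1..k}" for i
        proof -
          have "(\<Sum>n=1..k. \<beta> i n * z n j) = ln 2 * (\<Sum>l=1..k. (\<Sum>n=1..k. \<beta> i n * \<alpha> n l) * of_int (j l)) + (\<Sum>n=1..k. \<beta> i n * s n j)"
          proof -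
            have e1: "(\<Sum>n=1..k. \<beta> i n * z n j) = ln 2 * (\<Sum>n=1..k. \<Sum>l=1..k. \<beta> i n * \<alpha> n l * of_int (j l)) + (\<Sum>n=1..k. \<beta> i n * s n j)"
            proof -
              have "(\<Sum>n=1..k. \<beta> i n * z n j) = (\<Sum>n=1..k. ln 2 * (\<Sum>l=1..k. \<beta> i n * \<alpha> n l * of_int (j l)) + \<beta> i n * s n j)"
                by (rule sum.cong[OF refl]) (simp add: zsplit distrib_left sum_distrib_left ac_simps)
              also have "\<dots> = ln 2 * (\<Sum>n=1..k. \<Sum>l=1..k. \<beta> i n * \<alpha> n l * of_int (j l)) + (\<Sum>n=1..k. \<beta> i n * s n j)"
                by (simp only: sum.distrib sum_distrib_left)
              finally show ?thesis .
            qed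
            have e2: "(\<Sum>n=1..k. \<Sum>l=1..k. \<beta> i n * \<alpha> n l * of_int (j l)) = (\<Sum>l=1..k. (\<Sum>n=1..k. \<beta> i n * \<alpha> n l) * of_int (j l))"
              by (subst sum.swap) (simp only: sum_distrib_right)
            show ?thesis using e1 e2 by simp
          qed
          also have "(\<Sum>l=1..k. (\<Sum>n=1..k. \<beta> i n * \<alpha> n l) * of_int (j l)) = (\<Sum>l=1..k. (if i = l then of_int (j l) else 0))"
            using \<beta> i by (intro sum.cong) auto
          also have "\<dots> = of_int (j i)" using i by (simp add: sum.delta)
          finally show ?thesis unfolding t_def by (simp add: field_simps)
        qed
        have tb: "\<bar>real_of_int (j i) - t i j\<bar> \<le> R / ln 2 * (\<Sum>l=1..k. \<bar>z l j\<bar>)" if i: "i \<in> {1..k}" for i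
        proof -
          have "ln 2 * \<bar>real_of_int (j i) - t i j\<bar> = \<bar>ln 2 * (real_of_int (j i) - t i j)\<bar>" by (simp add: abs_mult)
          also have "\<dots> = \<bar>\<Sum>n=1..k. \<beta> i n * z n j\<bar>" using ti[OF i] by simp
          also have "\<dots> \<le> (\<Sum>n=1..k. \<bar>\<beta> i n\<bar> * \<bar>z n j\<bar>)" by (rule order_trans[OF sum_abs]) (simp add: abs_mult)
          also have "\<dots> \<le> (\<Sum>n=1..k. R * \<bar>z n j\<bar>)" using \<beta>R i by (intro sum_mono mult_right_mono) auto
          finally have "ln 2 * \<bar>real_of_int (j i) - t i j\<bar> \<le> R * (\<Sum>l=1..k. \<bar>z l j\<bar>)" by (simp only: sum_distrib_left)
          hence "\<bar>real_of_int (j i) - t i j\<bar> \<le> R * (\<Sum>l=1..k. \<bar>z l j\<bar>) / ln 2"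
            by (subst pos_le_divide_eq) (simp_all add: mult.commute)
          thus ?thesis by simp
        qed
        have "(\<Sum>i=1..k. \<bar>real_of_int (j i) - t i j\<bar>) \<le> (\<Sum>i=1..k. R / ln 2 * (\<Sum>l=1..k. \<bar>z l j\<bar>))"
          using tb by (intro sum_mono) auto
        also have "\<dots> = real k * R / ln 2 * (\<Sum>l=1..k. \<bar>z l j\<bar>)" by simp
        finally have "\<rho> * (\<Sum>i=1..k. \<bar>real_of_int (j i) - t i j\<bar>) \<le> \<rho> * (real k * R / ln 2 * (\<Sum>l=1..k. \<bar>z l j\<bar>))"
          using \<rho>pos by (intro mult_left_mono) auto
        also have "\<rho> * (real k * R / ln 2 * (\<Sum>l=1..k. \<bar>z l j\<bar>)) = c * (\<Sum>l=1..k. \<bar>z l j\<bar>)"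
          unfolding \<rho>_def using R1 assms(1) by (simp add: field_simps)
        finally show ?thesis using Ppos by simp
      qed
      also have "\<dots> = G j" unfolding G_def sum_distrib_left exp_sum[OF finite_atLeastAtMost] ..
      finally show ?thesis .
    qed
    have Gnn: "G j \<ge> 0" for j unfolding G_def using Ppos by (simp add: prod_nonneg)
    have fin_bound: "(\<Sum>j\<in>F. f j) \<le> C * (\<Prod>i=k+1..d. real_of_int (b i - a i)) * P"
      if F: "finite F" "F \<subseteq> lattice_box d k a b" for F
    proof -
      define N where "N = (\<Sum>j\<in>F. \<Sum>i=1..k. \<bar>j i\<bar>)"
      define T where "T = Zbox {k+1..d} (\<lambda>i. {a i..b i})"
      define H where "H = Zbox {1..k} (\<lambda>_. {-N..N})"
      define pl where "pl = (\<lambda>(u::nat\<Rightarrow>int, v::nat\<Rightarrow>int). (\<lambda>i. u i + v i))"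
      have Tfin: "finite T" unfolding T_def by (intro Zbox_finite) auto
      have Hfin: "finite H" unfolding H_def by (intro Zbox_finite) auto
      have Fsub: "F \<subseteq> pl ` (T \<times> H)"
      proof
        fix j assume jF: "j \<in> F"
        define u where "u i = (if i \<in> {k+1..d} then j i else 0)" for i
        define v where "v i = (if i \<in> {1..k} then j i else 0)" for i
        have jb: "\<forall>i. i \<notin> {1..d} \<longrightarrow> j i = 0" "\<forall>i\<in>{k+1..d}. a i \<le> j i \<and> j i \<le> b i"
          using jF F(2) unfolding lattice_box_def by auto
        have jN: "\<bar>j i\<bar> \<le> N" if "i \<in> {1..k}" for i
        proof -
          have "\<bar>j i\<bar> \<le> (\<Sum>i=1..k. \<bar>j i\<bar>)" using that by (intro member_le_sum) auto
          also have "\<dots> \<le> N" unfolding N_def using jF F(1)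
            by (intro member_le_sum[of _ _ "\<lambda>j. \<Sum>i=1..k. \<bar>j i\<bar>"]) (auto intro: sum_nonneg)
          finally show ?thesis .
        qed
        have "v \<in> H" unfolding H_def Zbox_def
        proof (intro CollectI conjI ballI allI impI)
          fix i assume i: "i \<in> {1..k}"
          have "v i = j i" unfolding v_def using i by (rule if_P)
          moreover have "j i \<le> N" "- j i \<le> N" using abs_le_D1[OF jN[OF i]] abs_le_D2[OF jN[OF i]] by auto
          ultimately show "v i \<in> {-N..N}" by simp
        next
          fix i assume "i \<notin> {1..k}" thus "v i = 0" unfolding v_def by (rule if_not_P)
        qed
        moreover have "u \<in> T" unfolding T_def Zbox_def
        proof (intro CollectI conjI ballI allI impI)
          fix i assume i: "i \<in> {k+1..d}"
          have "u i = j i" unfolding u_def using i by (rule if_P)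
          moreover have "a i \<le> j i \<and> j i \<le> b i" using jb(2) i by blast
          ultimately show "u i \<in> {a i..b i}" by simp
        next
          fix i assume "i \<notin> {k+1..d}" thus "u i = 0" unfolding u_def by (rule if_not_P)
        qed
        moreover have "j = pl (u, v)"
        proof (rule ext)
          fix i
          show "j i = pl (u, v) i"
          proof (cases "i \<in> {1..k}")
            case True
            hence "i \<notin> {k+1..d}" by auto
            thus ?thesis using True by (simp add: pl_def u_def v_def)
          next
            case False
            show ?thesis
            proof (cases "i \<in> {k+1..d}")
              case True
              thus ?thesis using False by (simp add: pl_def u_def v_def)
            next
              case F2: False
              hence "i \<notin> {1..d}" using False assms(2) by auto
              hence "j i = 0" using jb(1) by blast
              thus ?thesis using False F2 by (simp add: pl_def u_def v_def)
            qed
          qed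
        qed
        ultimately show "j \<in> pl ` (T \<times> H)" by blast
      qed
      have "(\<Sum>j\<in>F. f j) \<le> (\<Sum>j\<in>F. G j)" using key by (intro sum_mono) auto
      also have "\<dots> \<le> (\<Sum>j\<in>pl ` (T \<times> H). G j)"
        by (rule sum_mono2[OF finite_imageI[OF finite_cartesian_product[OF Tfin Hfin]] Fsub]) (rule Gnn)
      also have "\<dots> \<le> (\<Sum>p\<in>T \<times> H. G (pl p))"
      proof -
        have "sum G (pl ` (T \<times> H)) \<le> sum (G \<circ> pl) (T \<times> H)"
          by (rule sum_image_le[OF finite_cartesian_product[OF Tfin Hfin]]) (rule Gnn)
        thus ?thesis by (simp only: comp_def)
      qed
      also have "\<dots> = (\<Sum>u\<in>T. \<Sum>v\<in>H. G (pl (u, v)))" by (subst sum.cartesian_product) (simp add: case_prod_unfold)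
      also have "\<dots> \<le> (\<Sum>u\<in>T. P * K1 \<rho> ^ k)"
      proof (rule sum_mono)
        fix u assume u: "u \<in> T"
        have u0: "u i = 0" if "i \<in> {1..k}" for i using u that unfolding T_def Zbox_def by auto
        have Geq: "G (pl (u, v)) = P * (\<Prod>i=1..k. exp (- \<rho> * \<bar>real_of_int (v i) - t i u\<bar>))" if v: "v \<in> H" for v
        proof -
          have v0: "v i = 0" if "i \<in> {k+1..d}" for i using v that unfolding H_def Zbox_def by auto
          have "s n (pl (u, v)) = s n u" for n unfolding s_def pl_def using v0 by simp
          hence "t i (pl (u, v)) = t i u" for i unfolding t_def by simp
          thus ?thesis unfolding G_def using u0 by (auto simp: pl_def intro!: prod.cong)
        qed
        have "(\<Sum>v\<in>H. G (pl (u, v))) = P * (\<Sum>v\<in>H. \<Prod>i=1..k. exp (- \<rho> * \<bar>real_of_int (v i) - t i u\<bar>))"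
          using Geq by (simp add: sum_distrib_left)
        also have "(\<Sum>v\<in>H. \<Prod>i=1..k. exp (- \<rho> * \<bar>real_of_int (v i) - t i u\<bar>))
            = (\<Prod>i=1..k. \<Sum>m\<in>{-N..N}. exp (- \<rho> * \<bar>real_of_int m - t i u\<bar>))"
          unfolding H_def by (rule Zbox_prod_sum) auto
        also have "\<dots> \<le> (\<Prod>i=1..k. K1 \<rho>)"
          using \<rho>pos by (intro prod_mono conjI exp_sum_le sum_nonneg) auto
        finally show "(\<Sum>v\<in>H. G (pl (u, v))) \<le> P * K1 \<rho> ^ k"
          using Ppos by (simp add: mult_left_mono)
      qed
      also have "\<dots> = real (card T) * (P * K1 \<rho> ^ k)" by simp
      finally have S1: "(\<Sum>j\<in>F. f j) \<le> real (card T) * (P * K1 \<rho> ^ k)" .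
      have cardT: "real (card T) \<le> 2 ^ (d - k) * (\<Prod>i=k+1..d. real_of_int (b i - a i))"
      proof -
        have "real (card T) = (\<Prod>i=k+1..d. real (card {a i..b i}))"
          unfolding T_def by (simp add: Zbox_card)
        also have "\<dots> \<le> (\<Prod>i=k+1..d. 2 * real_of_int (b i - a i))"
        proof (rule prod_mono)
          fix i assume "i \<in> {k+1..d}"
          with ab have "a i < b i" by auto
          thus "0 \<le> real (card {a i..b i}) \<and> real (card {a i..b i}) \<le> 2 * real_of_int (b i - a i)"
            by simp
        qed
        also have "\<dots> = 2 ^ (d - k) * (\<Prod>i=k+1..d. real_of_int (b i - a i))"
          by (simp only: prod.distrib prod_constant card_atLeastAtMost) simp
        finally show ?thesis .
      qed
      have PK: "0 \<le> P * K1 \<rho> ^ k" using Ppos K1_pos[OF \<rho>pos] by simp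
      note S1
      also have "real (card T) * (P * K1 \<rho> ^ k) \<le> 2 ^ (d - k) * (\<Prod>i=k+1..d. real_of_int (b i - a i)) * (P * K1 \<rho> ^ k)"
        by (rule mult_right_mono[OF cardT PK])
      also have "\<dots> = C * (\<Prod>i=k+1..d. real_of_int (b i - a i)) * P" unfolding C_def by (simp only: mult.assoc mult.commute mult.left_commute)
      finally show ?thesis .
    qed
    have "(\<Sum>\<^sub>\<infinity>j\<in>lattice_box d k a b. ennreal (f j)) \<le> ennreal (C * (\<Prod>i=k+1..d. real_of_int (b i - a i)) * P)"
    proof (rule infsum_le_finite_sums)
      show "(\<lambda>j. ennreal (f j)) summable_on lattice_box d k a b" by (rule nonneg_summable_on_complete) simp
      fix F assume F: "finite F" "F \<subseteq> lattice_box d k a b"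
      have "(\<Sum>j\<in>F. ennreal (f j)) = ennreal (\<Sum>j\<in>F. f j)" by (rule sum_ennreal) (rule less_imp_le[OF fpos])
      also have "\<dots> \<le> ennreal (C * (\<Prod>i=k+1..d. real_of_int (b i - a i)) * P)"
        by (rule ennreal_leI[OF fin_bound[OF F]])
      finally show "(\<Sum>j\<in>F. ennreal (f j)) \<le> ennreal (C * (\<Prod>i=k+1..d. real_of_int (b i - a i)) * P)" .
    qed
    thus "(\<Sum>\<^sub>\<infinity>j\<in>lattice_box d k a b.
                ennreal (Min ((\<lambda>n. M n * 2 powr dotZ d (\<alpha> n) j) ` {1..k+1})))
            \<le> ennreal (C * (\<Prod>i=k+1..d. real_of_int (b i - a i)) * (\<Prod>n=1..k+1. M n powr \<theta> n))"
      unfolding f_def P_def .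
  qed
qed

end
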